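(* Let $V$ be a finite set, $C$ a partition of $V$, $k>0$, and let $G=(V,E)$ be the clique graph of $C$ with edge weight $k$. Then for every nonempty $d\subseteq V$, $\frac{w_d}{v_d}\le f_C(d)$.
   Context: The clique graph of a partition $C$ of $V$ with edge weight $k$ is $G=(V,E)$ with $E(i,j)=k$ if $i$ and $j$ lie in the same block of $C$ (including $i=j$) and $E(i,j)=0$ otherwise. For $d\subseteq V$: $v_d=\sum_{i\in d}\sum_{j\in V}E(i,j)$ and $w_d=\sum_{i,j\in d}E(i,j)$. Further $f_C(d)=\max_{c\in C}\frac{|c\cap d|}{|c|}$. *)

theory Defs
  imports Complex_Main "HOL-Library.Disjoint_Sets"
begin

definition clique_graph :: "'a set set \<Rightarrow> real \<Rightarrow> 'a \<Rightarrow> 'a \<Rightarrow> real" where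
  "clique_graph C k i j = (if \<exists>c\<in>C. i \<in> c \<and> j \<in> c then k else 0)"

definition vol :: "'a set \<Rightarrow> ('a \<Rightarrow> 'a \<Rightarrow> real) \<Rightarrow> 'a set \<Rightarrow> real" where
  "vol V E d = (\<Sum>i\<in>d. \<Sum>j\<in>V. E i j)"

definition wgt :: "('a \<Rightarrow> 'a \<Rightarrow> real) \<Rightarrow> 'a set \<Rightarrow> real" where
  "wgt E d = (\<Sum>i\<in>d. \<Sum>j\<in>d. E i j)"

definition fC :: "'a set set \<Rightarrow> 'a set \<Rightarrow> real" where
  "fC C d = Max ((\<lambda>c. real (card (c \<inter> d)) / real (card c)) ` C)"

end

theory Submission
  imports Defs
begin

lemma disj_uniq:
  assumes "disjoint C" "a \<in> C" "b \<in> C" "i \<in> a" "i \<in> b"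
  shows "a = b"
proof (rule ccontr)
  assume "a \<noteq> b"
  then have "a \<inter> b = {}" using disjointD[OF assms(1-3)] by blast
  then show False using assms(4,5) by blast
qed

theorem lemma1:
  fixes V :: "'a set" and C :: "'a set set" and k :: real and d :: "'a set"
  assumes "finite V" and "partition_on V C" and "k > 0"
    and "d \<subseteq> V" and "d \<noteq> {}"
  shows "wgt (clique_graph C k) d / vol V (clique_graph C k) d \<le> fC C d"
proof -
  have U: "V = \<Union>C" using partition_onD1[OF assms(2)] .
  have D: "disjoint C" using partition_onD2[OF assms(2)] .
  have NE: "{} \<notin> C" using partition_onD3[OF assms(2)] .
  have finC: "finite C" using assms(1) U finite_UnionD by auto
  have fin_c: "\<And>c. c \<in> C \<Longrightarrow> finite c" using assms(1) U
    by (simp add: Union_upper rev_finite_subset)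
  define blk where "blk i = (THE c. c \<in> C \<and> i \<in> c)" for i
  have blk: "blk i \<in> C \<and> i \<in> blk i" if iV0: "i \<in> V" for i
  proof -
    obtain c where c: "c \<in> C" "i \<in> c" using iV0 U by auto
    have "blk i = c" unfolding blk_def
    proof (rule the_equality)
      show "c \<in> C \<and> i \<in> c" using c by simp
      fix c' assume "c' \<in> C \<and> i \<in> c'"
      then show "c' = c" using disj_uniq[OF D, of c' c i] c by simp
    qed
    then show ?thesis using c by simp
  qed
  have E: "clique_graph C k i j = (if j \<in> blk i then k else 0)" if "i \<in> V" for i j
  proof -
    have "(\<exists>c\<in>C. i \<in> c \<and> j \<in> c) = (j \<in> blk i)"
      using blk[OF that] D disj_uniq by metis
    then show ?thesis unfolding clique_graph_def by simp
  qed
  have S: "(\<Sum>j\<in>A. clique_graph C k i j) = k * card (A \<inter> blk i)"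
    if "i \<in> V" "finite A" for i A
  proof -
    have "(\<Sum>j\<in>A. clique_graph C k i j) = (\<Sum>j\<in>A. if j \<in> blk i then k else 0)"
      using E[OF that(1)] by simp
    also have "\<dots> = (\<Sum>j\<in>A \<inter> blk i. k)"
      using that(2) by (simp add: sum.If_cases)
    also have "\<dots> = k * card (A \<inter> blk i)" by simp
    finally show ?thesis .
  qed
  have finD: "finite d" using assms(1,4) finite_subset by blast
  let ?f = "fC C d"
  have fge: "real (card (c \<inter> d)) / real (card c) \<le> ?f" if "c \<in> C" for c
    unfolding fC_def using finC that by (intro Max_ge) auto
  have cpos: "card c > 0" if "c \<in> C" for c
    using fin_c[OF that] NE that by (metis card_gt_0_iff)
  have trm: "k * card (d \<inter> blk i) \<le> ?f * (k * card (V \<inter> blk i))" if "i \<in> d" for i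
  proof -
    have iV: "i \<in> V" using that assms(4) by auto
    have bC: "blk i \<in> C" and bsub: "blk i \<subseteq> V" using blk[OF iV] U by auto
    have "V \<inter> blk i = blk i" using bsub by auto
    moreover have "real (card (blk i \<inter> d)) \<le> ?f * real (card (blk i))"
      using fge[OF bC] cpos[OF bC] by (simp add: divide_le_eq)
    ultimately show ?thesis using assms(3)
      by (simp add: Int_commute mult.left_commute)
  qed
  have w: "wgt (clique_graph C k) d = (\<Sum>i\<in>d. k * card (d \<inter> blk i))"
    unfolding wgt_def using S finD assms(4) by (intro sum.cong) auto
  have v: "vol V (clique_graph C k) d = (\<Sum>i\<in>d. k * card (V \<inter> blk i))"
    unfolding vol_def using S assms(1,4) by (intro sum.cong) auto
  have le: "wgt (clique_graph C k) d \<le> ?f * vol V (clique_graph C k) d"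
    unfolding w v sum_distrib_left using trm by (intro sum_mono) auto
  have vpos: "vol V (clique_graph C k) d > 0"
    unfolding v
  proof (rule sum_pos)
    fix i assume i: "i \<in> d"
    then have iV: "i \<in> V" using assms(4) by auto
    have "V \<inter> blk i = blk i" using blk[OF iV] U by auto
    then show "0 < k * real (card (V \<inter> blk i))"
      using cpos blk[OF iV] assms(3) by simp
  qed (use finD assms(5) in auto)
  show ?thesis using le vpos by (simp add: divide_le_eq)
qed

end
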